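(* Let $\mathcal{Z}$ and $\mathcal{X}$ be two mutually unbiased orthonormal bases of $\mathbb{C}^2$. Assume the CQC conjecture holds for these bases, i.e. for every two-qubit state $\sigma_{AB}$ on $\mathbb{C}^2\otimes\mathbb{C}^2$ one has $I(Z^A:Z^B)+I(X^A:X^B)\le I(A:B)$. Then every two-qubit state $\rho_{AB}$ satisfies $$H(Z^AZ^B)+H(X^AX^B)\ \ge\ 2+H(AB).$$
   Context: All logarithms are base 2 and $0\log 0=0$. Two orthonormal bases $\{|z_i\rangle\}$, $\{|x_j\rangle\}$ of $\mathbb{C}^d$ are mutually unbiased if $|\langle z_i|x_j\rangle|^2=1/d$ for all $i,j$. $H(AB)$ is the von Neumann entropy of $\rho_{AB}$, $H(A),H(B)$ those of its marginals, and $I(A:B)=H(A)+H(B)-H(AB)$. For a basis $\mathcal{M}=\{|m_j\rangle\}$, $M^A$ and $M^B$ denote the classical random variables obtained when both parties measure their subsystem in $\mathcal{M}$, with joint distribution $p(j,k)=\langle m_j\otimes m_k|\rho_{AB}|m_j\otimes m_k\rangle$; $H(M^AM^B)$ is the Shannon entropy of this joint distribution and $I(M^A:M^B)=H(M^A)+H(M^B)-H(M^AM^B)$ the classical mutual information. *)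

theory Defs
  imports "Jordan_Normal_Form.Char_Poly"
begin

text \<open>Conventions: matrices are Jordan_Normal_Form complex matrices. A two-qubit
  operator is a 4x4 matrix w.r.t. the product basis, index of |j> (x) |k> is 2*j+k.\<close>

definition xlogx :: "real \<Rightarrow> real" where
  "xlogx p = (if p = 0 then 0 else p * log 2 p)"

definition cinner :: "complex vec \<Rightarrow> complex vec \<Rightarrow> complex" where
  "cinner u v = (\<Sum>i<dim_vec u. cnj (u $ i) * v $ i)"

definition hermitian :: "complex mat \<Rightarrow> bool" where
  "hermitian A \<longleftrightarrow> (\<forall>i<dim_row A. \<forall>j<dim_row A. A $$ (i, j) = cnj (A $$ (j, i)))"

definition positive_semidef :: "complex mat \<Rightarrow> bool" where
  "positive_semidef A \<longleftrightarrow> (\<forall>v\<in>carrier_vec (dim_row A). 0 \<le> Re (cinner v (A *\<^sub>v v)))"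

definition density_matrix :: "nat \<Rightarrow> complex mat \<Rightarrow> bool" where
  "density_matrix d A \<longleftrightarrow> A \<in> carrier_mat d d \<and> hermitian A \<and> positive_semidef A
      \<and> (\<Sum>i<d. A $$ (i, i)) = 1"

definition two_qubit_state :: "complex mat \<Rightarrow> bool" where
  "two_qubit_state \<rho> \<longleftrightarrow> density_matrix 4 \<rho>"

text \<open>Von Neumann entropy (base 2): -sum lambda log lambda over the eigenvalues
  (with multiplicity, i.e. the roots of the characteristic polynomial).\<close>
definition vn_entropy :: "complex mat \<Rightarrow> real" where
  "vn_entropy A = (let es = (SOME es. char_poly A = (\<Prod>a\<leftarrow>es. [:- a, 1:]) \<and> length es = dim_row A)
                   in - (\<Sum>e\<leftarrow>es. xlogx (Re e)))"

definition ptrace_B :: "complex mat \<Rightarrow> complex mat" where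
  "ptrace_B \<rho> = mat 2 2 (\<lambda>(i, j). \<Sum>k<2. \<rho> $$ (2*i + k, 2*j + k))"

definition ptrace_A :: "complex mat \<Rightarrow> complex mat" where
  "ptrace_A \<rho> = mat 2 2 (\<lambda>(i, j). \<Sum>k<2. \<rho> $$ (2*k + i, 2*k + j))"

definition qmutual_info :: "complex mat \<Rightarrow> real" where
  "qmutual_info \<rho> = vn_entropy (ptrace_B \<rho>) + vn_entropy (ptrace_A \<rho>) - vn_entropy \<rho>"

definition orthonormal_basis2 :: "(nat \<Rightarrow> complex vec) \<Rightarrow> bool" where
  "orthonormal_basis2 b \<longleftrightarrow> (\<forall>i<2. b i \<in> carrier_vec 2) \<and>
      (\<forall>i<2. \<forall>j<2. cinner (b i) (b j) = (if i = j then 1 else 0))"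

definition mutually_unbiased2 :: "(nat \<Rightarrow> complex vec) \<Rightarrow> (nat \<Rightarrow> complex vec) \<Rightarrow> bool" where
  "mutually_unbiased2 z x \<longleftrightarrow> (\<forall>i<2. \<forall>j<2. (cmod (cinner (z i) (x j)))\<^sup>2 = 1 / 2)"

definition kron_vec :: "complex vec \<Rightarrow> complex vec \<Rightarrow> complex vec" where
  "kron_vec u v = vec (dim_vec u * dim_vec v) (\<lambda>i. u $ (i div dim_vec v) * v $ (i mod dim_vec v))"

definition meas_prob :: "(nat \<Rightarrow> complex vec) \<Rightarrow> complex mat \<Rightarrow> nat \<Rightarrow> nat \<Rightarrow> real" where
  "meas_prob m \<rho> j k = Re (cinner (kron_vec (m j) (m k)) (\<rho> *\<^sub>v kron_vec (m j) (m k)))"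

definition joint_shannon :: "(nat \<Rightarrow> complex vec) \<Rightarrow> complex mat \<Rightarrow> real" where
  "joint_shannon m \<rho> = - (\<Sum>j<2. \<Sum>k<2. xlogx (meas_prob m \<rho> j k))"

definition shannon_A :: "(nat \<Rightarrow> complex vec) \<Rightarrow> complex mat \<Rightarrow> real" where
  "shannon_A m \<rho> = - (\<Sum>j<2. xlogx (\<Sum>k<2. meas_prob m \<rho> j k))"

definition shannon_B :: "(nat \<Rightarrow> complex vec) \<Rightarrow> complex mat \<Rightarrow> real" where
  "shannon_B m \<rho> = - (\<Sum>k<2. xlogx (\<Sum>j<2. meas_prob m \<rho> j k))"

definition cmutual_info :: "(nat \<Rightarrow> complex vec) \<Rightarrow> complex mat \<Rightarrow> real" where
  "cmutual_info m \<rho> = shannon_A m \<rho> + shannon_B m \<rho> - joint_shannon m \<rho>"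

end

theory Submission
  imports Defs
begin


definition phi :: "real \<Rightarrow> real" where
  "phi t = (1+t)*ln(1+t) + (1-t)*ln(1-t)"

definition LL :: "real \<Rightarrow> real" where
  "LL t = ln(1+t) - ln(1-t)"

lemma xlnx_ge: "0 \<le> x \<Longrightarrow> x - 1 \<le> x * ln (x::real)"
proof (cases "x = 0")
  case False
  assume "0 \<le> x"
  with False have x: "0 < x" by simp
  have "ln (1/x) \<le> 1/x - 1" using x by (intro ln_le_minus_one) simp
  hence "- ln x \<le> 1/x - 1" using x by (simp add: ln_div)
  hence "x * (- ln x) \<le> x * (1/x - 1)" using x by (intro mult_left_mono) auto
  thus ?thesis using x by (simp add: algebra_simps)
qed simp

lemma phi_nonneg: "-1 \<le> t \<Longrightarrow> t \<le> 1 \<Longrightarrow> 0 \<le> phi t"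
  using xlnx_ge[of "1+t"] xlnx_ge[of "1-t"] unfolding phi_def by linarith

lemma phi_even: "phi (-t) = phi t"
  unfolding phi_def by simp

lemma phi_zero: "phi 0 = 0" unfolding phi_def by simp

lemma phi_deriv: assumes "-1 < t" "t < 1" shows "(phi has_real_derivative LL t) (at t)"
proof -
  have a: "1+t \<noteq> 0" "1-t \<noteq> 0" using assms by auto
  have d1: "((\<lambda>t. (1+t)*ln(1+t)) has_real_derivative ln(1+t) + 1) (at t)"
    using a assms by (auto intro!: derivative_eq_intros)
  have d2: "((\<lambda>t. (1-t)*ln(1-t)) has_real_derivative - ln(1-t) - 1) (at t)"
    using a assms by (auto intro!: derivative_eq_intros)
  show ?thesis unfolding phi_def LL_def using DERIV_add[OF d1 d2] by simp
qed

lemma LL_deriv: assumes "-1 < t" "t < 1" shows "(LL has_real_derivative (2/(1-t^2))) (at t)"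
proof -
  have a: "1+t \<noteq> 0" "1-t \<noteq> 0" "1 - t^2 \<noteq> 0" using assms by (auto simp: abs_square_eq_1)
  show ?thesis unfolding LL_def
    using a assms by (auto intro!: derivative_eq_intros simp: field_simps power2_eq_square)
qed

lemma xlnx_tendsto: "((\<lambda>x::real. x * ln x) \<longlongrightarrow> 0) (at_right 0)"
proof -
  have "((\<lambda>y::real. ln y / y) \<longlongrightarrow> 0) at_top" by (rule ln_x_over_x_tendsto_0)
  hence "((\<lambda>x::real. ln (inverse x) / inverse x) \<longlongrightarrow> 0) (at_right 0)"
    by (rule filterlim_compose) (rule filterlim_inverse_at_top_right)
  hence t: "((\<lambda>x::real. - (ln (inverse x) / inverse x)) \<longlongrightarrow> - 0) (at_right 0)"
    by (rule tendsto_minus)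
  have e: "eventually (\<lambda>x::real. - (ln (inverse x) / inverse x) = x * ln x) (at_right 0)"
    by (rule eventually_mono[OF eventually_at_right_less[of 0]]) (auto simp: ln_inverse divide_inverse mult.commute)
  show ?thesis using Lim_transform_eventually[OF t e] by simp
qed

lemma xlnx_cont: "continuous_on {0..} (\<lambda>x::real. x * ln x)"
proof -
  have "continuous (at x within {0..}) (\<lambda>x::real. x * ln x)" if "x \<ge> 0" for x
  proof (cases "x = 0")
    case True
    have "((\<lambda>x::real. x * ln x) \<longlongrightarrow> 0 * ln 0) (at 0 within {0..})"
    proof -
      have "((\<lambda>x::real. x * ln x) \<longlongrightarrow> 0) (at 0 within {0..})"
        using xlnx_tendsto by (simp add: at_within_Ici_at_right)
      thus ?thesis by simp
    qed
    thus ?thesis using True by (simp add: continuous_within)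
  next
    case False
    with that have "x > 0" by simp
    hence "isCont ln x" by (intro isCont_ln) simp
    hence "isCont (\<lambda>x::real. x * ln x) x" by (intro isCont_mult) auto
    thus ?thesis by (rule continuous_at_imp_continuous_at_within)
  qed
  thus ?thesis by (simp add: continuous_on_eq_continuous_within)
qed

lemma LL_bound: assumes "0 \<le> t" "t < 1" shows "LL t \<le> 2*t/(1-t^2)"
proof -
  define K where "K = (\<lambda>t. 2*t/(1-t^2) - LL t)"
  have "K 0 \<le> K t"
  proof (rule DERIV_nonneg_imp_increasing_open[OF assms(1)])
    fix x assume x: "0 < x" "x < t"
    have p: "1 - x^2 > 0" using x assms by (simp add: abs_square_less_1)
    have dL: "(LL has_real_derivative 2/(1-x^2)) (at x)" using x assms by (intro LL_deriv) auto
    have d: "(K has_real_derivative (2*(1-x^2) + 2*x*(2*x))/(1-x^2)^2 - 2/(1-x^2)) (at x)"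
      unfolding K_def using x assms p dL
      by (auto intro!: derivative_eq_intros simp: power2_eq_square)
    have "(2*(1-x^2) + 2*x*(2*x))/(1-x^2)^2 - 2/(1-x^2) = 4*x^2/(1-x^2)^2"
      using p by (simp add: divide_simps) (simp add: algebra_simps power2_eq_square)
    also have "\<dots> \<ge> 0" by simp
    finally show "\<exists>y. (K has_real_derivative y) (at x) \<and> 0 \<le> y" using d by blast
  next
    have "\<forall>x\<in>{0..t}. 1 - x^2 \<noteq> 0 \<and> 0 < 1 + x \<and> 0 < 1 - x" using assms
      by (auto simp: abs_square_eq_1)
    thus "continuous_on {0..t} K" unfolding K_def LL_def
      by (intro continuous_intros) auto
  qed
  thus ?thesis unfolding K_def LL_def by simp
qed

lemma psi_mono: assumes "0 < s" "s \<le> t" "t < 1" shows "LL s / s \<le> LL t / t"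
proof (rule DERIV_nonneg_imp_increasing_open[OF assms(2)])
  fix x assume x: "s < x" "x < t"
  have p: "1 - x^2 > 0" using x assms by (simp add: abs_square_less_1)
  have dL: "(LL has_real_derivative 2/(1-x^2)) (at x)" using x assms by (intro LL_deriv) auto
  have d: "((\<lambda>x. LL x / x) has_real_derivative (2/(1-x^2) * x - LL x) / x^2) (at x)"
    using x assms p dL
    by (auto intro!: derivative_eq_intros simp: power2_eq_square)
  have "LL x \<le> 2*x/(1-x^2)" using x assms by (intro LL_bound) auto
  hence "0 \<le> (2/(1-x^2) * x - LL x) / x^2" by simp
  thus "\<exists>y. ((\<lambda>x. LL x / x) has_real_derivative y) (at x) \<and> 0 \<le> y" using d by blast
next
  have "\<forall>x\<in>{s..t}. x \<noteq> 0 \<and> 0 < 1 + x \<and> 0 < 1 - x" using assms by auto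
  thus "continuous_on {s..t} (\<lambda>x. LL x / x)" unfolding LL_def
    by (intro continuous_intros) auto
qed

lemma phi_cont: "continuous_on {-1..1} phi"
proof -
  have "continuous_on {-1..1} ((\<lambda>x::real. x * ln x) \<circ> (\<lambda>t. 1+t))"
    by (rule continuous_on_compose, intro continuous_intros, rule continuous_on_subset[OF xlnx_cont], auto)
  hence c1: "continuous_on {-1..1} (\<lambda>t::real. (1+t)*ln(1+t))" by (simp add: o_def)
  have "continuous_on {-1..1} ((\<lambda>x::real. x * ln x) \<circ> (\<lambda>t. 1-t))"
    by (rule continuous_on_compose, intro continuous_intros, rule continuous_on_subset[OF xlnx_cont], auto)
  hence c2: "continuous_on {-1..1} (\<lambda>t::real. (1-t)*ln(1-t))" by (simp add: o_def)
  show ?thesis unfolding phi_def using continuous_on_add[OF c1 c2] by simp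
qed

lemma inv_half_eq: fixes s x :: real shows "inverse s / 2 * (2*x) = x / s"
  by (cases "s = 0") (simp_all add: field_simps)

lemma superadd: assumes a: "0 \<le> a" and b0: "0 \<le> b" and ab: "a^2 + b^2 \<le> 1"
  shows "phi a + phi b \<le> phi (sqrt (a^2+b^2))"
proof (cases "b = 0")
  case True thus ?thesis using a by (simp add: phi_zero)
next
  case False hence b: "b > 0" using b0 by simp
  have "a^2 \<le> 1" using ab zero_le_power2[of b] by linarith
  hence a1: "a \<le> 1" using a by (simp add: abs_square_le_1)
  define G where "G = (\<lambda>x. phi (sqrt (x^2+b^2)) - phi x - phi b)"
  have "G 0 \<le> G a"
  proof (rule DERIV_nonneg_imp_increasing_open[OF a])
    fix x assume x: "0 < x" "x < a"
    define r where "r = sqrt (x^2+b^2)"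
    have pos: "0 < x^2+b^2" using b by (intro add_nonneg_pos) auto
    have r0: "0 < r" using pos by (simp add: r_def)
    have rx: "x < r" unfolding r_def using b by (intro real_less_rsqrt) simp
    have "x^2 < a^2" using x by (intro power_strict_mono) auto
    hence "x^2 + b^2 < 1" using ab by simp
    hence r1: "r < 1" unfolding r_def by (simp add: real_sqrt_less_iff[of _ 1, simplified])
    have dq: "((\<lambda>x. x^2+b^2) has_real_derivative 2*x) (at x)"
      by (auto intro!: derivative_eq_intros)
    have eq: "inverse (sqrt (x^2+b^2)) / 2 * (2*x) = x / r"
      unfolding r_def by (rule inv_half_eq)
    have ds: "((\<lambda>x. sqrt(x^2+b^2)) has_real_derivative x / r) (at x)"
      using DERIV_chain2[OF DERIV_real_sqrt[OF pos] dq] by (simp only: eq)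
    have dp: "(phi has_real_derivative LL r) (at (sqrt (x^2+b^2)))"
      using r0 r1 unfolding r_def[symmetric] by (intro phi_deriv) auto
    have dc: "((\<lambda>x. phi (sqrt (x^2+b^2))) has_real_derivative LL r * (x / r)) (at x)"
      using DERIV_chain2[OF dp ds] .
    have dx: "(phi has_real_derivative LL x) (at x)" using x rx r1 by (intro phi_deriv) auto
    have dG: "(G has_real_derivative LL r * (x / r) - LL x - 0) (at x)"
      unfolding G_def by (intro DERIV_diff dc dx DERIV_const)
    have "LL x / x \<le> LL r / r" using x rx r1 by (intro psi_mono) auto
    hence "x * (LL x / x) \<le> x * (LL r / r)" using x by (intro mult_left_mono) auto
    hence "LL x \<le> LL r * (x / r)" using x by (simp add: ac_simps)
    thus "\<exists>y. (G has_real_derivative y) (at x) \<and> 0 \<le> y" using dG by (intro exI[of _ "LL r * (x / r) - LL x - 0"]) auto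
  next
    have s1: "sqrt (x^2+b^2) \<in> {-1..1}" if "x \<in> {0..a}" for x
    proof -
      have "x^2 \<le> a^2" using that by (intro power_mono) auto
      hence "x^2 + b^2 \<le> 1" using ab by simp
      hence "sqrt (x^2+b^2) \<le> 1" by simp
      moreover have "0 \<le> sqrt (x^2+b^2)" by (intro real_sqrt_ge_zero) simp
      ultimately show ?thesis unfolding atLeastAtMost_iff by linarith
    qed
    have cs: "continuous_on {0..a} (\<lambda>x. sqrt (x^2+b^2))" by (intro continuous_intros)
    have sub: "(\<lambda>x. sqrt(x^2+b^2)) ` {0..a} \<subseteq> {-1..1}" using s1 by blast
    have c1: "continuous_on {0..a} (\<lambda>x. phi (sqrt (x^2+b^2)))"
      by (rule continuous_on_compose2[OF phi_cont cs sub])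
    have c2: "continuous_on {0..a} phi"
      by (rule continuous_on_subset[OF phi_cont]) (use a1 in auto)
    show "continuous_on {0..a} G" unfolding G_def
      by (intro continuous_on_diff c1 c2 continuous_on_const)
  qed
  moreover have "G 0 = 0" unfolding G_def using b0 by (simp add: phi_zero)
  ultimately show ?thesis unfolding G_def by simp
qed

lemma phi_abs: "phi \<bar>t\<bar> = phi t"
  by (cases "t \<ge> 0") (auto simp: phi_even)

lemma phi_ineq: assumes "a^2 + b^2 \<le> R^2" "R^2 \<le> 1" shows "phi a + phi b \<le> phi R"
proof -
  define s where "s = sqrt (a^2+b^2)"
  define c where "c = sqrt (R^2 - a^2 - b^2)"
  have "phi \<bar>a\<bar> + phi \<bar>b\<bar> \<le> phi (sqrt (\<bar>a\<bar>^2 + \<bar>b\<bar>^2))"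
    using assms by (intro superadd) auto
  hence 1: "phi a + phi b \<le> phi s" unfolding s_def phi_abs by simp
  have s2: "s^2 = a^2 + b^2" unfolding s_def by simp
  have c2: "c^2 = R^2 - a^2 - b^2" unfolding c_def using assms by simp
  have "phi s + phi c \<le> phi (sqrt (s^2 + c^2))"
    using assms s2 c2 by (intro superadd) (auto simp: s_def c_def)
  also have "sqrt (s^2 + c^2) = \<bar>R\<bar>" using s2 c2 by simp
  finally have 2: "phi s + phi c \<le> phi R" unfolding phi_abs .
  have "R^2 - a^2 - b^2 \<le> 1" using assms zero_le_power2[of a] zero_le_power2[of b] by linarith
  hence "c \<le> 1" unfolding c_def by simp
  moreover have "0 \<le> c" unfolding c_def using assms by simp
  ultimately have "0 \<le> phi c" by (intro phi_nonneg) auto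
  thus ?thesis using 1 2 by linarith
qed

lemma xlogx_ln: "xlogx p = p * ln p / ln 2"
  unfolding xlogx_def by (simp add: log_def)

definition hb :: "real \<Rightarrow> real" where
  "hb t = - (xlogx ((1+t)/2) + xlogx ((1-t)/2))"

lemma hb_phi: assumes "-1 \<le> t" "t \<le> 1" shows "hb t = 1 - phi t / (2 * ln 2)"
proof -
  have e: "p * ln (p/2) = p * ln p - p * ln 2" if "0 \<le> p" for p :: real
    using that by (cases "p = 0") (auto simp: ln_div algebra_simps)
  have "hb t = - (((1+t) * ln ((1+t)/2) + (1-t) * ln ((1-t)/2)) / (2 * ln 2))"
    unfolding hb_def xlogx_ln by (simp add: field_simps)
  also have "\<dots> = - ((phi t - 2 * ln 2) / (2 * ln 2))"
    using e[of "1+t"] e[of "1-t"] assms unfolding phi_def by (simp add: algebra_simps)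
  also have "\<dots> = 1 - phi t / (2 * ln 2)" by (simp add: field_simps)
  finally show ?thesis .
qed

lemma hb_ineq: assumes "a^2 + b^2 \<le> R^2" "R^2 \<le> 1"
  shows "1 + hb R \<le> hb a + hb b"
proof -
  have "a^2 \<le> 1" "b^2 \<le> 1" using assms zero_le_power2[of a] zero_le_power2[of b] by linarith+
  hence "\<bar>a\<bar> \<le> 1" "\<bar>b\<bar> \<le> 1" "\<bar>R\<bar> \<le> 1" using assms by (simp_all add: abs_square_le_1)
  hence h: "hb a = 1 - phi a / (2 * ln 2)" "hb b = 1 - phi b / (2 * ln 2)" "hb R = 1 - phi R / (2 * ln 2)"
    by (auto intro!: hb_phi)
  have "phi a + phi b \<le> phi R" by (rule phi_ineq[OF assms])
  hence "phi a / (2 * ln 2) + phi b / (2 * ln 2) \<le> phi R / (2 * ln 2)"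
    by (simp add: add_divide_distrib[symmetric] divide_right_mono)
  thus ?thesis unfolding h by simp
qed



lemma sum2: "(\<Sum>i<2. F i) = F 0 + F (1::nat)"
  by (simp add: numeral_2_eq_2)
lemma sum4: "(\<Sum>i<4. F i) = F 0 + F 1 + F 2 + F (3::nat)"
  by (simp add: numeral_eq_Suc)

lemma bessel3: fixes r1 r2 r3 n1 n2 n3 m1 m2 m3 :: real
  assumes n: "n1^2+n2^2+n3^2 = 1" and m: "m1^2+m2^2+m3^2 = 1" and nm: "n1*m1 + n2*m2 + n3*m3 = 0"
  shows "(r1*n1 + r2*n2 + r3*n3)^2 + (r1*m1 + r2*m2 + r3*m3)^2 \<le> r1^2+r2^2+r3^2"
proof -
  define \<alpha> where "\<alpha> = r1*n1 + r2*n2 + r3*n3"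
  define \<beta> where "\<beta> = r1*m1 + r2*m2 + r3*m3"
  have "0 \<le> (r1 - \<alpha>*n1 - \<beta>*m1)^2 + (r2 - \<alpha>*n2 - \<beta>*m2)^2 + (r3 - \<alpha>*n3 - \<beta>*m3)^2" by simp
  also have "\<dots> = (r1^2+r2^2+r3^2) - 2*\<alpha>*\<alpha> - 2*\<beta>*\<beta> + \<alpha>^2*(n1^2+n2^2+n3^2)
       + \<beta>^2*(m1^2+m2^2+m3^2) + 2*\<alpha>*\<beta>*(n1*m1 + n2*m2 + n3*m3)"
    unfolding \<alpha>_def \<beta>_def by (simp add: power2_eq_square algebra_simps)
  also have "\<dots> = (r1^2+r2^2+r3^2) - \<alpha>^2 - \<beta>^2" using n m nm by (simp add: power2_eq_square)
  finally show ?thesis unfolding \<alpha>_def \<beta>_def by simp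
qed

lemma unit_bloch: fixes u0 u1 :: complex
  shows "((cmod u0)^2 - (cmod u1)^2)^2 + (2 * Re (cnj u0 * u1))^2 + (2 * Im (cnj u0 * u1))^2
     = ((cmod u0)^2 + (cmod u1)^2)^2"
  unfolding cmod_power2 by (simp add: power2_eq_square algebra_simps)

lemma orth_bloch: fixes a0 a1 b0 b1 :: complex
  shows "((cmod a0)^2 - (cmod a1)^2) * ((cmod b0)^2 - (cmod b1)^2)
     + (2 * Re (cnj a0 * a1)) * (2 * Re (cnj b0 * b1)) + (2 * Im (cnj a0 * a1)) * (2 * Im (cnj b0 * b1))
     = 2 * (cmod (cnj a0 * b0 + cnj a1 * b1))^2 - ((cmod a0)^2 + (cmod a1)^2) * ((cmod b0)^2 + (cmod b1)^2)"
  unfolding cmod_power2 by (simp add: power2_eq_square algebra_simps)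



lemma sum_atLeast0_4: "(\<Sum>i\<in>{0..<4}. F i) = F 0 + F 1 + F 2 + F (3::nat)"
  by (simp add: numeral_eq_Suc atLeast0LessThan)
lemma sum_atLeast0_2: "(\<Sum>i\<in>{0..<2}. F i) = F 0 + F (1::nat)"
  by (simp add: numeral_eq_Suc atLeast0LessThan)

lemma qform: assumes "\<sigma> \<in> carrier_mat 2 2" "v \<in> carrier_vec 2"
  shows "cinner v (\<sigma> *\<^sub>v v) = cnj (v$0) * (\<sigma>$$(0,0) * v$0 + \<sigma>$$(0,1) * v$1)
       + cnj (v$1) * (\<sigma>$$(1,0) * v$0 + \<sigma>$$(1,1) * v$1)"
  using assms by (simp add: cinner_def mult_mat_vec_def scalar_prod_def sum2 sum_atLeast0_2)

lemma compl:
  assumes "orthonormal_basis2 z" "m < 2" "m' < 2"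
  shows "(\<Sum>k<2. cnj (z k $ m) * z k $ m') = (if m = m' then 1 else 0)"
proof -
  define U where "U = mat 2 2 (\<lambda>(i,k). z k $ i)"
  define V where "V = mat 2 2 (\<lambda>(k,i). cnj (z k $ i))"
  have U: "U \<in> carrier_mat 2 2" and V: "V \<in> carrier_mat 2 2" unfolding U_def V_def by auto
  have car: "\<And>i. i < 2 \<Longrightarrow> dim_vec (z i) = 2" using assms(1) unfolding orthonormal_basis2_def by auto
  have "V * U = 1\<^sub>m 2"
  proof (rule eq_matI)
    fix k l assume kl: "k < dim_row (1\<^sub>m 2)" "l < dim_col (1\<^sub>m (2::nat))"
    hence "k < 2" "l < 2" by auto
    hence "(V * U) $$ (k, l) = cinner (z k) (z l)"
      unfolding U_def V_def cinner_def using car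
      by (simp add: scalar_prod_def atLeast0LessThan row_def col_def)
    also have "\<dots> = 1\<^sub>m 2 $$ (k, l)" using assms(1) \<open>k < 2\<close> \<open>l < 2\<close>
      unfolding orthonormal_basis2_def by simp
    finally show "(V * U) $$ (k, l) = 1\<^sub>m 2 $$ (k, l)" .
  qed (auto simp: U_def V_def)
  hence UV: "U * V = 1\<^sub>m 2" by (rule mat_mult_left_right_inverse[OF V U])
  have "(U * V) $$ (m', m) = (\<Sum>k<2. z k $ m' * cnj (z k $ m))"
    using assms(2,3) unfolding U_def V_def
    by (simp add: scalar_prod_def atLeast0LessThan row_def col_def)
  thus ?thesis using assms(2,3) unfolding UV by (auto simp: mult.commute)
qed

lemma trace_sum:
  assumes "orthonormal_basis2 z" "\<sigma> \<in> carrier_mat 2 2"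
  shows "(\<Sum>j<2. cinner (z j) (\<sigma> *\<^sub>v z j)) = \<sigma>$$(0,0) + \<sigma>$$(1,1)"
proof -
  define C where "C = (\<lambda>m m'. \<Sum>k<2. cnj (z k $ m) * z k $ m')"
  have zc: "z 0 \<in> carrier_vec 2" "z 1 \<in> carrier_vec 2" using assms(1) unfolding orthonormal_basis2_def by auto
  have "(\<Sum>j<2. cinner (z j) (\<sigma> *\<^sub>v z j)) = \<sigma>$$(0,0) * C 0 0 + \<sigma>$$(0,1) * C 0 1 + \<sigma>$$(1,0) * C 1 0 + \<sigma>$$(1,1) * C 1 1"
    unfolding C_def using zc assms(2) by (simp add: qform sum2 algebra_simps)
  also have "\<dots> = \<sigma>$$(0,0) + \<sigma>$$(1,1)" unfolding C_def using compl[OF assms(1)] by simp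
  finally show ?thesis .
qed

lemma margA:
  fixes g :: "nat \<Rightarrow> complex vec" and f :: "complex vec" and \<rho> :: "complex mat"
  assumes f: "f \<in> carrier_vec 2" and g: "\<And>k. k < 2 \<Longrightarrow> g k \<in> carrier_vec 2"
    and cg: "\<And>m m'. m < 2 \<Longrightarrow> m' < 2 \<Longrightarrow> (\<Sum>k<2. cnj (g k $ m) * g k $ m') = (if m = m' then 1 else 0)"
    and \<rho>: "\<rho> \<in> carrier_mat 4 4"
  shows "(\<Sum>k<2. cinner (kron_vec f (g k)) (\<rho> *\<^sub>v kron_vec f (g k))) = cinner f (ptrace_B \<rho> *\<^sub>v f)"
proof -
  define C where "C = (\<lambda>m m'. \<Sum>k<2. cnj (g k $ m) * g k $ m')"
  have gc: "g 0 \<in> carrier_vec 2" "g 1 \<in> carrier_vec 2" using g by auto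
  have c00: "C 0 0 = 1" and c01: "C 0 1 = 0" and c10: "C 1 0 = 0" and c11: "C 1 1 = 1"
    unfolding C_def using cg[of 0 0] cg[of 0 1] cg[of 1 0] cg[of 1 1] by auto
  have "(\<Sum>k<2. cinner (kron_vec f (g k)) (\<rho> *\<^sub>v kron_vec f (g k))) = (cnj (f$(0)) * \<rho>$$(0,0) * f$(0) * C 0 0 + cnj (f$(0)) * \<rho>$$(0,1) * f$(0) * C 0 1 + cnj (f$(0)) * \<rho>$$(0,2) * f$(1) * C 0 0 + cnj (f$(0)) * \<rho>$$(0,3) * f$(1) * C 0 1 + cnj (f$(0)) * \<rho>$$(1,0) * f$(0) * C 1 0 + cnj (f$(0)) * \<rho>$$(1,1) * f$(0) * C 1 1 + cnj (f$(0)) * \<rho>$$(1,2) * f$(1) * C 1 0 + cnj (f$(0)) * \<rho>$$(1,3) * f$(1) * C 1 1 + cnj (f$(1)) * \<rho>$$(2,0) * f$(0) * C 0 0 + cnj (f$(1)) * \<rho>$$(2,1) * f$(0) * C 0 1 + cnj (f$(1)) * \<rho>$$(2,2) * f$(1) * C 0 0 + cnj (f$(1)) * \<rho>$$(2,3) * f$(1) * C 0 1 + cnj (f$(1)) * \<rho>$$(3,0) * f$(0) * C 1 0 + cnj (f$(1)) * \<rho>$$(3,1) * f$(0) * C 1 1 + cnj (f$(1)) * \<rho>$$(3,2) * f$(1) * C 1 0 + cnj (f$(1)) * \<rho>$$(3,3) * f$(1) * C 1 1)"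
    unfolding C_def using f gc \<rho>
    by (simp add: cinner_def kron_vec_def mult_mat_vec_def scalar_prod_def sum2 sum4 sum_atLeast0_4 algebra_simps)
  also have "\<dots> = cinner f (ptrace_B \<rho> *\<^sub>v f)"
    unfolding c00 c01 c10 c11 using f
    by (simp add: cinner_def ptrace_B_def mult_mat_vec_def scalar_prod_def sum2 sum_atLeast0_2 algebra_simps numeral_eq_Suc)
  finally show ?thesis .
qed

lemma margB:
  fixes g :: "nat \<Rightarrow> complex vec" and f :: "complex vec" and \<rho> :: "complex mat"
  assumes f: "f \<in> carrier_vec 2" and g: "\<And>k. k < 2 \<Longrightarrow> g k \<in> carrier_vec 2"
    and cg: "\<And>m m'. m < 2 \<Longrightarrow> m' < 2 \<Longrightarrow> (\<Sum>k<2. cnj (g k $ m) * g k $ m') = (if m = m' then 1 else 0)"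
    and \<rho>: "\<rho> \<in> carrier_mat 4 4"
  shows "(\<Sum>k<2. cinner (kron_vec (g k) f) (\<rho> *\<^sub>v kron_vec (g k) f)) = cinner f (ptrace_A \<rho> *\<^sub>v f)"
proof -
  define C where "C = (\<lambda>m m'. \<Sum>k<2. cnj (g k $ m) * g k $ m')"
  have gc: "g 0 \<in> carrier_vec 2" "g 1 \<in> carrier_vec 2" using g by auto
  have c00: "C 0 0 = 1" and c01: "C 0 1 = 0" and c10: "C 1 0 = 0" and c11: "C 1 1 = 1"
    unfolding C_def using cg[of 0 0] cg[of 0 1] cg[of 1 0] cg[of 1 1] by auto
  have "(\<Sum>k<2. cinner (kron_vec (g k) f) (\<rho> *\<^sub>v kron_vec (g k) f)) = (cnj (f$(0)) * \<rho>$$(0,0) * f$(0) * C 0 0 + cnj (f$(0)) * \<rho>$$(0,1) * f$(1) * C 0 0 + cnj (f$(0)) * \<rho>$$(0,2) * f$(0) * C 0 1 + cnj (f$(0)) * \<rho>$$(0,3) * f$(1) * C 0 1 + cnj (f$(1)) * \<rho>$$(1,0) * f$(0) * C 0 0 + cnj (f$(1)) * \<rho>$$(1,1) * f$(1) * C 0 0 + cnj (f$(1)) * \<rho>$$(1,2) * f$(0) * C 0 1 + cnj (f$(1)) * \<rho>$$(1,3) * f$(1) * C 0 1 + cnj (f$(0)) * \<rho>$$(2,0) * f$(0) * C 1 0 + cnj (f$(0)) * \<rho>$$(2,1) * f$(1) * C 1 0 + cnj (f$(0)) * \<rho>$$(2,2) * f$(0) * C 1 1 + cnj (f$(0)) *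 \<rho>$$(2,3) * f$(1) * C 1 1 + cnj (f$(1)) * \<rho>$$(3,0) * f$(0) * C 1 0 + cnj (f$(1)) * \<rho>$$(3,1) * f$(1) * C 1 0 + cnj (f$(1)) * \<rho>$$(3,2) * f$(0) * C 1 1 + cnj (f$(1)) * \<rho>$$(3,3) * f$(1) * C 1 1)"
    unfolding C_def using f gc \<rho>
    by (simp add: cinner_def kron_vec_def mult_mat_vec_def scalar_prod_def sum2 sum4 sum_atLeast0_4 algebra_simps)
  also have "\<dots> = cinner f (ptrace_A \<rho> *\<^sub>v f)"
    unfolding c00 c01 c10 c11 using f
    by (simp add: cinner_def ptrace_A_def mult_mat_vec_def scalar_prod_def sum2 sum_atLeast0_2 algebra_simps numeral_eq_Suc)
  finally show ?thesis .
qed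



definition vec2 :: "complex \<Rightarrow> complex \<Rightarrow> complex vec" where
  "vec2 a b = vec 2 (\<lambda>i. if i = 0 then a else b)"

lemma vec2_simps[simp]: "vec2 a b \<in> carrier_vec 2" "vec2 a b $ 0 = a" "vec2 a b $ 1 = b" "vec2 a b $ Suc 0 = b"
  unfolding vec2_def by auto

lemma herm2:
  assumes "\<sigma> \<in> carrier_mat 2 2" "hermitian \<sigma>"
  shows "\<sigma>$$(0,0) = complex_of_real (Re (\<sigma>$$(0,0)))" "\<sigma>$$(1,1) = complex_of_real (Re (\<sigma>$$(1,1)))"
        "\<sigma>$$(1,0) = cnj (\<sigma>$$(0,1))"
proof -
  have dim: "dim_row \<sigma> = 2" using assms(1) by simp
  have hh: "\<forall>i<2. \<forall>j<2. \<sigma>$$(i,j) = cnj (\<sigma>$$(j,i))"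
    using assms(2) unfolding hermitian_def dim .
  have h: "\<And>i j. i < 2 \<Longrightarrow> j < 2 \<Longrightarrow> \<sigma>$$(i,j) = cnj (\<sigma>$$(j,i))"
    using hh by blast
  have "Im (\<sigma>$$(0,0)) = 0" using arg_cong[OF h[of 0 0], of Im] by simp
  thus "\<sigma>$$(0,0) = complex_of_real (Re (\<sigma>$$(0,0)))" by (simp add: complex_eq_iff)
  have "Im (\<sigma>$$(1,1)) = 0" using arg_cong[OF h[of 1 1], of Im] by simp
  thus "\<sigma>$$(1,1) = complex_of_real (Re (\<sigma>$$(1,1)))" by (simp add: complex_eq_iff)
  show "\<sigma>$$(1,0) = cnj (\<sigma>$$(0,1))" using h[of 1 0] by simp
qed

lemma qre:
  assumes "\<sigma> \<in> carrier_mat 2 2" "v \<in> carrier_vec 2"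
    and "\<sigma>$$(0,0) = complex_of_real p" "\<sigma>$$(1,1) = complex_of_real q" "\<sigma>$$(1,0) = cnj w" "\<sigma>$$(0,1) = w"
  shows "Re (cinner v (\<sigma> *\<^sub>v v)) = p * (cmod (v$0))^2 + q * (cmod (v$1))^2 + 2 * Re (w * (cnj (v$0) * v$1))"
  unfolding cmod_power2 using assms by (simp add: qform power2_eq_square algebra_simps)

lemma psd2:
  assumes s: "\<sigma> \<in> carrier_mat 2 2" and "hermitian \<sigma>" and psd: "positive_semidef \<sigma>"
  shows "0 \<le> Re (\<sigma>$$(0,0))" "0 \<le> Re (\<sigma>$$(1,1))"
    "(cmod (\<sigma>$$(0,1)))^2 \<le> Re (\<sigma>$$(0,0)) * Re (\<sigma>$$(1,1))"
proof -
  define p where "p = Re (\<sigma>$$(0,0))"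
  define q where "q = Re (\<sigma>$$(1,1))"
  define w where "w = \<sigma>$$(0,1)"
  have e: "\<sigma>$$(0,0) = complex_of_real p" "\<sigma>$$(1,1) = complex_of_real q" "\<sigma>$$(1,0) = cnj w" "\<sigma>$$(0,1) = w"
    using herm2[OF s \<open>hermitian \<sigma>\<close>] unfolding p_def q_def w_def by auto
  have Q: "0 \<le> p * (cmod a)^2 + q * (cmod b)^2 + 2 * Re (w * (cnj a * b))" for a b
  proof -
    have "0 \<le> Re (cinner (vec2 a b) (\<sigma> *\<^sub>v vec2 a b))"
      using psd s unfolding positive_semidef_def by auto
    thus ?thesis using qre[OF s vec2_simps(1) e] by simp
  qed
  have p0: "0 \<le> p" using Q[of 1 0] by simp
  have q0: "0 \<le> q" using Q[of 0 1] by simp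
  have ww: "w * cnj w = complex_of_real ((cmod w)^2)"
    by (simp add: complex_mult_cnj cmod_power2)
  have "(cmod w)^2 \<le> p * q"
  proof (cases "p > 0")
    case True
    have "0 \<le> p * (cmod w)^2 + q * p^2 + 2 * Re (w * (cnj w * - complex_of_real p))" using Q[of w "- of_real p"]
      by (simp add: norm_mult power_mult_distrib)
    also have "2 * Re (w * (cnj w * - complex_of_real p)) = - 2 * p * (cmod w)^2"
      by (simp add: mult.assoc[symmetric] ww)
    finally have "0 \<le> p * (p * q - (cmod w)^2)" by (simp add: algebra_simps power2_eq_square)
    thus ?thesis using True by (simp add: zero_le_mult_iff)
  next
    case False
    hence p: "p = 0" using p0 by simp
    show ?thesis
    proof (cases "q > 0")
      case True
      have cw: "w * (cnj (complex_of_real q) * - cnj w) = - (complex_of_real q * (w * cnj w))"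
        by (metis mult.left_commute mult_minus_right complex_cnj_complex_of_real)
      have "0 \<le> p * q^2 + q * (cmod w)^2 + 2 * Re (w * (cnj (complex_of_real q) * - cnj w))" using Q[of "of_real q" "- cnj w"]
        by (simp add: norm_mult power_mult_distrib)
      also have "2 * Re (w * (cnj (complex_of_real q) * - cnj w)) = - 2 * q * (cmod w)^2"
        unfolding cw ww by simp
      finally have "0 \<le> q * (p * q - (cmod w)^2)" by (simp add: algebra_simps power2_eq_square)
      thus ?thesis using True by (simp add: zero_le_mult_iff)
    next
      case False
      hence q: "q = 0" using q0 by simp
      have "0 \<le> 2 * Re (w * (cnj 1 * - cnj w))" using Q[of 1 "- cnj w"] p q by simp
      also have "2 * Re (w * (cnj 1 * - cnj w)) = - 2 * (cmod w)^2" by (simp add: ww)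
      finally show ?thesis using p q by simp
    qed
  qed
  thus "0 \<le> Re (\<sigma>$$(0,0))" "0 \<le> Re (\<sigma>$$(1,1))" "(cmod (\<sigma>$$(0,1)))^2 \<le> Re (\<sigma>$$(0,0)) * Re (\<sigma>$$(1,1))"
    using p0 q0 unfolding p_def q_def w_def by auto
qed



lemma cinner2: "u \<in> carrier_vec 2 \<Longrightarrow> cinner u v = cnj (u$0) * v$0 + cnj (u$1) * v$1"
  by (simp add: cinner_def sum2)

lemma unit2: assumes "u \<in> carrier_vec 2" "cinner u u = 1"
  shows "(cmod (u$0))^2 + (cmod (u$1))^2 = 1"
proof -
  have "Re (cinner u u) = 1" using assms by simp
  thus ?thesis using assms(1) unfolding cinner2[OF assms(1)] cmod_power2
    by (simp add: power2_eq_square)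
qed

lemma basis_facts:
  assumes oy: "orthonormal_basis2 y" and s: "\<sigma> \<in> carrier_mat 2 2"
    and e: "\<sigma>$$(0,0) = complex_of_real p" "\<sigma>$$(1,1) = complex_of_real (1-p)" "\<sigma>$$(1,0) = cnj w" "\<sigma>$$(0,1) = w"
  shows "- (\<Sum>j<2. xlogx (Re (cinner (y j) (\<sigma> *\<^sub>v y j)))) =
     hb ((2*p-1) * ((cmod (y 0$0))^2 - (cmod (y 0$1))^2) + (2 * Re w) * (2 * Re (cnj (y 0$0) * y 0$1))
         + (- 2 * Im w) * (2 * Im (cnj (y 0$0) * y 0$1)))"
    and "((cmod (y 0$0))^2 - (cmod (y 0$1))^2)^2 + (2 * Re (cnj (y 0$0) * y 0$1))^2 + (2 * Im (cnj (y 0$0) * y 0$1))^2 = 1"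
proof -
  have y0: "y 0 \<in> carrier_vec 2" and y1: "y 1 \<in> carrier_vec 2" and n0: "cinner (y 0) (y 0) = 1"
    using oy unfolding orthonormal_basis2_def by auto
  have un: "(cmod (y 0$0))^2 + (cmod (y 0$1))^2 = 1" by (rule unit2[OF y0 n0])
  define s0 where "s0 = Re (cinner (y 0) (\<sigma> *\<^sub>v y 0))"
  define s1 where "s1 = Re (cinner (y 1) (\<sigma> *\<^sub>v y 1))"
  have "s0 + s1 = Re (\<sigma>$$(0,0) + \<sigma>$$(1,1))"
    using arg_cong[OF trace_sum[OF oy s], of Re] unfolding s0_def s1_def by (simp add: sum2)
  hence s01: "s0 + s1 = 1" using e by simp
  have s0e: "s0 = p * (cmod (y 0$0))^2 + (1-p) * (cmod (y 0$1))^2 + 2 * Re (w * (cnj (y 0$0) * y 0$1))"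
    unfolding s0_def by (rule qre[OF s y0 e])
  define a where "a = (2*p-1) * ((cmod (y 0$0))^2 - (cmod (y 0$1))^2) + (2 * Re w) * (2 * Re (cnj (y 0$0) * y 0$1))
         + (- 2 * Im w) * (2 * Im (cnj (y 0$0) * y 0$1))"
  have "a = 2 * s0 - 1" unfolding a_def s0e using un
    by (simp add: algebra_simps)
  hence "(1 + a) / 2 = s0" "(1 - a) / 2 = s1" using s01 by auto
  thus "- (\<Sum>j<2. xlogx (Re (cinner (y j) (\<sigma> *\<^sub>v y j)))) = hb a"
    unfolding hb_def s0_def s1_def by (simp add: sum2)
  show "((cmod (y 0$0))^2 - (cmod (y 0$1))^2)^2 + (2 * Re (cnj (y 0$0) * y 0$1))^2 + (2 * Im (cnj (y 0$0) * y 0$1))^2 = 1"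
    using unit_bloch[of "y 0$0" "y 0$1"] un by simp
qed



lemma det2:
  fixes A :: "'a::comm_ring_1 mat"
  assumes "A \<in> carrier_mat 2 2"
  shows "det A = A$$(0,0) * A$$(1,1) - A$$(0,1) * A$$(1,0)"
proof -
  have "det A = (\<Sum>j<2. A $$ (0,j) * cofactor A 0 j)"
    by (rule laplace_expansion_row[OF assms]) simp
  also have "\<dots> = A$$(0,0) * A$$(1,1) - A$$(0,1) * A$$(1,0)"
    using assms
    by (simp add: cofactor_def numeral_2_eq_2 det_single mat_delete_carrier mat_delete_def)
  finally show ?thesis .
qed

lemma char_poly2:
  fixes A :: "complex mat"
  assumes "A \<in> carrier_mat 2 2"
  shows "char_poly A = [: A$$(0,0) * A$$(1,1) - A$$(0,1) * A$$(1,0), - (A$$(0,0) + A$$(1,1)), 1 :]"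
proof -
  have C: "char_poly_matrix A \<in> carrier_mat 2 2" using assms by simp
  show ?thesis unfolding char_poly_def det2[OF C] using assms
    by (simp add: char_poly_matrix_def numeral_2_eq_2 algebra_simps)
qed
lemma vn2:
  assumes A: "A \<in> carrier_mat 2 2" and cp: "char_poly A = [:-l1,1:] * [:-l2,1:]"
  shows "vn_entropy A = -(xlogx (Re l1) + xlogx (Re l2))"
proof -
  define P where "P = (\<lambda>es. char_poly A = (\<Prod>a\<leftarrow>es. [:- a, 1:]) \<and> length es = dim_row A)"
  have ex: "P [l1, l2]" unfolding P_def using A cp by simp
  hence "P (SOME es. P es)" by (rule someI)
  then obtain e1 e2 where es: "(SOME es. P es) = [e1, e2]" and pe: "[:-l1,1:] * [:-l2,1:] = [:-e1,1:] * [:-e2,1:]"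
    unfolding P_def using A cp
    by (auto simp: length_Suc_conv numeral_2_eq_2)
  hence s: "e1 + e2 = l1 + l2" and p: "e1 * e2 = l1 * l2" by (simp_all add: algebra_simps)
  have "(e1 - l1) * (e1 - l2) = 0" using s p proof - have "(e1 - l1) * (e1 - l2) = e1*e1 - e1*(l1+l2) + l1*l2" by (simp add: algebra_simps) also have "\<dots> = 0" using s p by (simp add: algebra_simps flip: s) finally show ?thesis . qed
  hence "(e1 = l1 \<and> e2 = l2) \<or> (e1 = l2 \<and> e2 = l1)" using s by auto
  hence "(\<Sum>e\<leftarrow>[e1,e2]. xlogx (Re e)) = xlogx (Re l1) + xlogx (Re l2)" by auto
  thus ?thesis unfolding vn_entropy_def Let_def P_def[symmetric] es by simp
qed
lemma poly_prod2: "[:-l1,1:] * [:-l2,1:] = [:l1*l2, -(l1+l2), (1::complex):]"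
  by (simp add: algebra_simps)

lemma qubit:
  fixes z x :: "nat \<Rightarrow> complex vec" and \<sigma> :: "complex mat"
  assumes oz: "orthonormal_basis2 z" and ox: "orthonormal_basis2 x" and mu: "mutually_unbiased2 z x"
    and s: "\<sigma> \<in> carrier_mat 2 2" and hs: "hermitian \<sigma>" and ps: "positive_semidef \<sigma>"
    and tr: "\<sigma>$$(0,0) + \<sigma>$$(1,1) = 1"
  shows "1 + vn_entropy \<sigma> \<le> - (\<Sum>j<2. xlogx (Re (cinner (z j) (\<sigma> *\<^sub>v z j))))
                         + - (\<Sum>j<2. xlogx (Re (cinner (x j) (\<sigma> *\<^sub>v x j))))"
proof -
  define p where "p = Re (\<sigma>$$(0,0))"
  define w where "w = \<sigma>$$(0,1)"
  note h3 = herm2[OF s hs]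
  have q: "Re (\<sigma>$$(1,1)) = 1 - p" using arg_cong[OF tr, of Re] unfolding p_def by simp
  have e: "\<sigma>$$(0,0) = complex_of_real p" "\<sigma>$$(1,1) = complex_of_real (1-p)" "\<sigma>$$(1,0) = cnj w" "\<sigma>$$(0,1) = w"
    using h3 q unfolding p_def w_def by auto
  have D: "(cmod w)^2 \<le> p * (1-p)" using psd2(3)[OF s hs ps] q unfolding p_def w_def by simp
  define c where "c = 2*p - 1"
  define RR where "RR = c^2 + (2 * Re w)^2 + (- 2 * Im w)^2"
  have RRe: "RR = 1 - 4 * (p * (1-p) - (cmod w)^2)"
    unfolding RR_def c_def cmod_power2 by (simp add: power2_eq_square algebra_simps)
  have RR0: "0 \<le> RR" unfolding RR_def by simp
  define R where "R = sqrt RR"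
  have R2: "R^2 = RR" unfolding R_def using RR0 by simp
  have R1: "R^2 \<le> 1" using R2 RRe D by simp
  define l1 where "l1 = complex_of_real ((1+R)/2)"
  define l2 where "l2 = complex_of_real ((1-R)/2)"
  have ww: "w * cnj w = complex_of_real ((cmod w)^2)"
    by (simp add: complex_mult_cnj cmod_power2)
  have "l1 * l2 = complex_of_real ((1 - R^2)/4)" unfolding l1_def l2_def
    by (simp add: power2_eq_square field_simps flip: of_real_mult)
  also have "\<dots> = complex_of_real (p * (1-p) - (cmod w)^2)" using R2 RRe by simp
  also have "\<dots> = \<sigma>$$(0,0) * \<sigma>$$(1,1) - \<sigma>$$(0,1) * \<sigma>$$(1,0)"
    unfolding e ww by simp
  finally have l12: "l1 * l2 = \<sigma>$$(0,0) * \<sigma>$$(1,1) - \<sigma>$$(0,1) * \<sigma>$$(1,0)" .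
  have r12: "(1+R)/2 + (1-R)/2 = (1::real)" by (simp add: field_simps)
  have "l1 + l2 = 1" unfolding l1_def l2_def of_real_add[symmetric] r12 by simp
  hence l12s: "-(l1 + l2) = - (\<sigma>$$(0,0) + \<sigma>$$(1,1))" using tr by simp
  have cp: "char_poly \<sigma> = [:-l1,1:] * [:-l2,1:]"
    unfolding char_poly2[OF s] poly_prod2 l12 l12s ..
  have vn: "vn_entropy \<sigma> = hb R"
    unfolding vn2[OF s cp] hb_def l1_def l2_def by simp
  note bz = basis_facts[OF oz s e]
  note bx = basis_facts[OF ox s e]
  define n1 where "n1 = (cmod (z 0$0))^2 - (cmod (z 0$1))^2"
  define n2 where "n2 = 2 * Re (cnj (z 0$0) * z 0$1)"
  define n3 where "n3 = 2 * Im (cnj (z 0$0) * z 0$1)"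
  define m1 where "m1 = (cmod (x 0$0))^2 - (cmod (x 0$1))^2"
  define m2 where "m2 = 2 * Re (cnj (x 0$0) * x 0$1)"
  define m3 where "m3 = 2 * Im (cnj (x 0$0) * x 0$1)"
  have z0: "z 0 \<in> carrier_vec 2" "cinner (z 0) (z 0) = 1" using oz unfolding orthonormal_basis2_def by auto
  have x0: "x 0 \<in> carrier_vec 2" "cinner (x 0) (x 0) = 1" using ox unfolding orthonormal_basis2_def by auto
  have mub: "(cmod (cinner (z 0) (x 0)))^2 = 1/2" using mu unfolding mutually_unbiased2_def by auto
  have "n1*m1 + n2*m2 + n3*m3 = 2 * (cmod (cinner (z 0) (x 0)))^2
      - ((cmod (z 0$0))^2 + (cmod (z 0$1))^2) * ((cmod (x 0$0))^2 + (cmod (x 0$1))^2)"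
    unfolding n1_def n2_def n3_def m1_def m2_def m3_def cinner2[OF z0(1)]
    by (rule orth_bloch)
  hence nm: "n1*m1 + n2*m2 + n3*m3 = 0" using mub unit2[OF z0] unit2[OF x0] by simp
  have bes: "(c*n1 + (2 * Re w)*n2 + (- 2 * Im w)*n3)^2 + (c*m1 + (2 * Re w)*m2 + (- 2 * Im w)*m3)^2 \<le> RR"
    unfolding RR_def
    by (rule bessel3) (use bz(2) bx(2) nm in \<open>simp_all add: n1_def n2_def n3_def m1_def m2_def m3_def\<close>)
  have "1 + hb R \<le> hb (c*n1 + (2 * Re w)*n2 + (- 2 * Im w)*n3) + hb (c*m1 + (2 * Re w)*m2 + (- 2 * Im w)*m3)"
    by (rule hb_ineq) (use bes R2 R1 in auto)
  thus ?thesis unfolding vn bz(1) bx(1) c_def n1_def n2_def n3_def m1_def m2_def m3_def .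
qed


lemma herm_entries:
  assumes "A \<in> carrier_mat n n" "hermitian A"
  shows "\<forall>i<n. \<forall>j<n. A$$(i,j) = cnj (A$$(j,i))"
proof -
  have dim: "dim_row A = n" using assms(1) by simp
  show ?thesis using assms(2) unfolding hermitian_def dim .
qed

lemma unit_compl: "m < 2 \<Longrightarrow> m' < 2 \<Longrightarrow>
  (\<Sum>k<2. cnj (unit_vec 2 k $ m) * unit_vec 2 k $ m') = (if m = m' then (1::complex) else 0)"
  by (auto simp: sum2 unit_vec_def less_2_cases_iff)

lemma ptrace_props:
  assumes "two_qubit_state \<rho>"
  shows "ptrace_B \<rho> \<in> carrier_mat 2 2" "hermitian (ptrace_B \<rho>)" "positive_semidef (ptrace_B \<rho>)"
        "ptrace_B \<rho> $$ (0,0) + ptrace_B \<rho> $$ (1,1) = 1"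
        "ptrace_A \<rho> \<in> carrier_mat 2 2" "hermitian (ptrace_A \<rho>)" "positive_semidef (ptrace_A \<rho>)"
        "ptrace_A \<rho> $$ (0,0) + ptrace_A \<rho> $$ (1,1) = 1"
proof -
  have r: "\<rho> \<in> carrier_mat 4 4" and hr: "hermitian \<rho>" and pr: "positive_semidef \<rho>"
    and tr: "(\<Sum>i<4. \<rho> $$ (i, i)) = 1"
    using assms unfolding two_qubit_state_def density_matrix_def by auto
  have hh: "\<forall>i<4. \<forall>j<4. \<rho>$$(i,j) = cnj (\<rho>$$(j,i))" by (rule herm_entries[OF r hr])
  have pr': "0 \<le> Re (cinner v (\<rho> *\<^sub>v v))" if "v \<in> carrier_vec 4" for v :: "complex vec"
    using pr that r unfolding positive_semidef_def by auto
  show cB: "ptrace_B \<rho> \<in> carrier_mat 2 2" and cA: "ptrace_A \<rho> \<in> carrier_mat 2 2"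
    unfolding ptrace_B_def ptrace_A_def by auto
  show "hermitian (ptrace_B \<rho>)" unfolding hermitian_def
  proof (intro allI impI)
    fix i j assume "i < dim_row (ptrace_B \<rho>)" "j < dim_row (ptrace_B \<rho>)"
    hence ij: "i < 2" "j < 2" unfolding ptrace_B_def by auto
    have "(\<Sum>k<2. \<rho> $$ (2*i + k, 2*j + k)) = (\<Sum>k<2. cnj (\<rho> $$ (2*j + k, 2*i + k)))"
    proof (rule sum.cong[OF refl])
      fix k assume "k \<in> {..<2::nat}"
      hence "2*i+k < 4" "2*j+k < 4" using ij by auto
      thus "\<rho> $$ (2*i + k, 2*j + k) = cnj (\<rho> $$ (2*j + k, 2*i + k))" using hh by blast
    qed
    thus "ptrace_B \<rho> $$ (i, j) = cnj (ptrace_B \<rho> $$ (j, i))"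
      unfolding ptrace_B_def using ij by simp
  qed
  show "hermitian (ptrace_A \<rho>)" unfolding hermitian_def
  proof (intro allI impI)
    fix i j assume "i < dim_row (ptrace_A \<rho>)" "j < dim_row (ptrace_A \<rho>)"
    hence ij: "i < 2" "j < 2" unfolding ptrace_A_def by auto
    have "(\<Sum>k<2. \<rho> $$ (2*k + i, 2*k + j)) = (\<Sum>k<2. cnj (\<rho> $$ (2*k + j, 2*k + i)))"
    proof (rule sum.cong[OF refl])
      fix k assume "k \<in> {..<2::nat}"
      hence "2*k+i < 4" "2*k+j < 4" using ij by auto
      thus "\<rho> $$ (2*k + i, 2*k + j) = cnj (\<rho> $$ (2*k + j, 2*k + i))" using hh by blast
    qed
    thus "ptrace_A \<rho> $$ (i, j) = cnj (ptrace_A \<rho> $$ (j, i))"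
      unfolding ptrace_A_def using ij by simp
  qed
  have uv: "\<And>k. k < 2 \<Longrightarrow> unit_vec 2 k \<in> carrier_vec 2" by simp
  show "positive_semidef (ptrace_B \<rho>)" unfolding positive_semidef_def
  proof
    fix v :: "complex vec" assume "v \<in> carrier_vec (dim_row (ptrace_B \<rho>))"
    hence v: "v \<in> carrier_vec 2" using cB by simp
    have "cinner v (ptrace_B \<rho> *\<^sub>v v) = (\<Sum>k<2. cinner (kron_vec v (unit_vec 2 k)) (\<rho> *\<^sub>v kron_vec v (unit_vec 2 k)))"
      by (rule margA[OF v uv unit_compl r, symmetric])
    hence "Re (cinner v (ptrace_B \<rho> *\<^sub>v v)) = (\<Sum>k<2. Re (cinner (kron_vec v (unit_vec 2 k)) (\<rho> *\<^sub>v kron_vec v (unit_vec 2 k))))"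
      by (simp add: Re_sum)
    also have "\<dots> \<ge> 0"
    proof (rule sum_nonneg)
      fix k assume "k \<in> {..<2::nat}"
      have dv: "dim_vec v = 2" using v by simp
      have "kron_vec v (unit_vec 2 k) \<in> carrier_vec 4" unfolding kron_vec_def dv by simp
      thus "0 \<le> Re (cinner (kron_vec v (unit_vec 2 k)) (\<rho> *\<^sub>v kron_vec v (unit_vec 2 k)))" by (rule pr')
    qed
    finally show "0 \<le> Re (cinner v (ptrace_B \<rho> *\<^sub>v v))" .
  qed
  show "positive_semidef (ptrace_A \<rho>)" unfolding positive_semidef_def
  proof
    fix v :: "complex vec" assume "v \<in> carrier_vec (dim_row (ptrace_A \<rho>))"
    hence v: "v \<in> carrier_vec 2" using cA by simp
    have "cinner v (ptrace_A \<rho> *\<^sub>v v) = (\<Sum>k<2. cinner (kron_vec (unit_vec 2 k) v) (\<rho> *\<^sub>v kron_vec (unit_vec 2 k) v))"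
      by (rule margB[OF v uv unit_compl r, symmetric])
    hence "Re (cinner v (ptrace_A \<rho> *\<^sub>v v)) = (\<Sum>k<2. Re (cinner (kron_vec (unit_vec 2 k) v) (\<rho> *\<^sub>v kron_vec (unit_vec 2 k) v)))"
      by (simp add: Re_sum)
    also have "\<dots> \<ge> 0"
    proof (rule sum_nonneg)
      fix k assume "k \<in> {..<2::nat}"
      have dv: "dim_vec v = 2" using v by simp
      have "kron_vec (unit_vec 2 k) v \<in> carrier_vec 4" unfolding kron_vec_def dv by simp
      thus "0 \<le> Re (cinner (kron_vec (unit_vec 2 k) v) (\<rho> *\<^sub>v kron_vec (unit_vec 2 k) v))" by (rule pr')
    qed
    finally show "0 \<le> Re (cinner v (ptrace_A \<rho> *\<^sub>v v))" .
  qed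
  have t4: "\<rho>$$(0,0) + \<rho>$$(1,1) + \<rho>$$(2,2) + \<rho>$$(3,3) = 1" using tr by (simp add: sum4)
  have "ptrace_B \<rho> $$ (0,0) + ptrace_B \<rho> $$ (1,1) = \<rho>$$(0,0) + \<rho>$$(1,1) + \<rho>$$(2,2) + \<rho>$$(3,3)"
    unfolding ptrace_B_def by (simp add: sum2 add.assoc numeral_eq_Suc)
  thus "ptrace_B \<rho> $$ (0,0) + ptrace_B \<rho> $$ (1,1) = 1" using t4 by simp
  have "ptrace_A \<rho> $$ (0,0) + ptrace_A \<rho> $$ (1,1) = \<rho>$$(0,0) + \<rho>$$(1,1) + \<rho>$$(2,2) + \<rho>$$(3,3)"
    unfolding ptrace_A_def by (simp add: sum2 algebra_simps numeral_eq_Suc)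
  thus "ptrace_A \<rho> $$ (0,0) + ptrace_A \<rho> $$ (1,1) = 1" using t4 by simp
qed

lemma shannonA_eq:
  assumes oz: "orthonormal_basis2 z" and r: "\<rho> \<in> carrier_mat 4 4"
  shows "shannon_A z \<rho> = - (\<Sum>j<2. xlogx (Re (cinner (z j) (ptrace_B \<rho> *\<^sub>v z j))))"
proof -
  have zc: "\<And>k. k < 2 \<Longrightarrow> z k \<in> carrier_vec 2" using oz unfolding orthonormal_basis2_def by auto
  have "(\<Sum>k<2. meas_prob z \<rho> j k) = Re (cinner (z j) (ptrace_B \<rho> *\<^sub>v z j))" if "j < 2" for j
  proof -
    have "(\<Sum>k<2. meas_prob z \<rho> j k) = Re (\<Sum>k<2. cinner (kron_vec (z j) (z k)) (\<rho> *\<^sub>v kron_vec (z j) (z k)))"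
      unfolding meas_prob_def by (simp add: Re_sum)
    also have "\<dots> = Re (cinner (z j) (ptrace_B \<rho> *\<^sub>v z j))"
      using margA[OF zc[OF that] zc compl[OF oz] r] by simp
    finally show ?thesis .
  qed
  thus ?thesis unfolding shannon_A_def by simp
qed

lemma shannonB_eq:
  assumes oz: "orthonormal_basis2 z" and r: "\<rho> \<in> carrier_mat 4 4"
  shows "shannon_B z \<rho> = - (\<Sum>k<2. xlogx (Re (cinner (z k) (ptrace_A \<rho> *\<^sub>v z k))))"
proof -
  have zc: "\<And>k. k < 2 \<Longrightarrow> z k \<in> carrier_vec 2" using oz unfolding orthonormal_basis2_def by auto
  have "(\<Sum>j<2. meas_prob z \<rho> j k) = Re (cinner (z k) (ptrace_A \<rho> *\<^sub>v z k))" if "k < 2" for k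
  proof -
    have "(\<Sum>j<2. meas_prob z \<rho> j k) = Re (\<Sum>j<2. cinner (kron_vec (z j) (z k)) (\<rho> *\<^sub>v kron_vec (z j) (z k)))"
      unfolding meas_prob_def by (simp add: Re_sum)
    also have "\<dots> = Re (cinner (z k) (ptrace_A \<rho> *\<^sub>v z k))"
      using margB[OF zc[OF that] zc compl[OF oz] r] by simp
    finally show ?thesis .
  qed
  thus ?thesis unfolding shannon_B_def by simp
qed

theorem proposition1:
  fixes z x :: "nat \<Rightarrow> complex vec" and \<rho> :: "complex mat"
  assumes "orthonormal_basis2 z" and "orthonormal_basis2 x"
    and "mutually_unbiased2 z x"
    and CQC: "\<forall>\<sigma>. two_qubit_state \<sigma> \<longrightarrow> cmutual_info z \<sigma> + cmutual_info x \<sigma> \<le> qmutual_info \<sigma>"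
    and "two_qubit_state \<rho>"
  shows "joint_shannon z \<rho> + joint_shannon x \<rho> \<ge> 2 + vn_entropy \<rho>"
proof -
  note P = ptrace_props[OF assms(5)]
  have r: "\<rho> \<in> carrier_mat 4 4" using assms(5) unfolding two_qubit_state_def density_matrix_def by auto
  have A: "1 + vn_entropy (ptrace_B \<rho>) \<le> shannon_A z \<rho> + shannon_A x \<rho>"
    unfolding shannonA_eq[OF assms(1) r] shannonA_eq[OF assms(2) r]
    by (rule qubit[OF assms(1,2,3) P(1-4)])
  have B: "1 + vn_entropy (ptrace_A \<rho>) \<le> shannon_B z \<rho> + shannon_B x \<rho>"
    unfolding shannonB_eq[OF assms(1) r] shannonB_eq[OF assms(2) r]
    by (rule qubit[OF assms(1,2,3) P(5-8)])
  have "cmutual_info z \<rho> + cmutual_info x \<rho> \<le> qmutual_info \<rho>" using CQC assms(5) by blast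
  thus ?thesis using A B unfolding cmutual_info_def qmutual_info_def by linarith
qed

end
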